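(* Let $n\geqslant 3$, $X\geqslant 1$ and $\mathbf{y}\in\mathbb{N}^n$ with $1\leqslant y_i\leqslant X$ for all $i$. Then $$N_{\mathbf{y}}(X)\ll\frac{X^{n-1}}{\|\mathbf{d}\|_2},$$ where $\|\cdot\|_2$ is the Euclidean norm on $\mathbb{R}^n$ and $\mathbf{d}=(d_1,\dots,d_n)$.
   Context: $N_{\mathbf{y}}(X)=\#\{\mathbf{x}\in\mathbb{Z}^n:\ \max_i|x_i|\leqslant X,\ \sum_{i=1}^n x_i\prod_{j\neq i}y_j=0\}$. Let $N=2^n-1$; for $h\in\{1,\dots,N\}$ write $h=\sum_{j}\varepsilon_j(h)2^{j-1}$ with $\varepsilon_j(h)\in\{0,1\}$; $h\preceq\ell$ means $\varepsilon_j(h)\leqslant\varepsilon_j(\ell)$ for all $j$. Let $(z_h)$ be the unique reduced $N$-tuple of positive integers ($\gcd(z_h,z_\ell)=1$ whenever $h,\ell$ are $\preceq$-incomparable) with $y_j=\prod_h z_h^{\varepsilon_j(h)}$, and $d_i=\prod_h z_h^{1-\varepsilon_i(h)}$. *)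

theory Defs
  imports Complex_Main
begin

text \<open>Indices are 0-based: coordinates i, j range over 0..n-1 (paper: 1..n),
  and eps j h is the binary digit of h at position j (paper: epsilon_{j+1}(h)).\<close>

definition eps :: "nat \<Rightarrow> nat \<Rightarrow> nat" where
  "eps j h = (h div 2 ^ j) mod 2"

definition preceq :: "nat \<Rightarrow> nat \<Rightarrow> nat \<Rightarrow> bool" where
  "preceq n h l \<longleftrightarrow> (\<forall>j<n. eps j h \<le> eps j l)"

definition Ncount :: "nat \<Rightarrow> (nat \<Rightarrow> nat) \<Rightarrow> real \<Rightarrow> nat" where
  "Ncount n y X = card {x :: nat \<Rightarrow> int.
      (\<forall>i\<ge>n. x i = 0) \<and> (\<forall>i<n. real_of_int \<bar>x i\<bar> \<le> X) \<and>
      (\<Sum>i<n. x i * (\<Prod>j\<in>{..<n} - {i}. int (y j))) = 0}"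

text \<open>Reduced N-tuple (z_h)_{h=1..N}, N = 2^n - 1, of positive integers
  (values outside 1..N are fixed to 0 to make it unique as a function).\<close>
definition is_reduced_tuple :: "nat \<Rightarrow> (nat \<Rightarrow> nat) \<Rightarrow> (nat \<Rightarrow> nat) \<Rightarrow> bool" where
  "is_reduced_tuple n y z \<longleftrightarrow>
     (\<forall>h\<in>{1..2^n - 1}. z h > 0) \<and> (\<forall>h. h \<notin> {1..2^n - 1} \<longrightarrow> z h = 0) \<and>
     (\<forall>h\<in>{1..2^n - 1}. \<forall>l\<in>{1..2^n - 1}.
        \<not> preceq n h l \<and> \<not> preceq n l h \<longrightarrow> coprime (z h) (z l)) \<and>
     (\<forall>j<n. y j = (\<Prod>h\<in>{1..2^n - 1}. z h ^ eps j h))"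

definition ztuple :: "nat \<Rightarrow> (nat \<Rightarrow> nat) \<Rightarrow> nat \<Rightarrow> nat" where
  "ztuple n y = (THE z. is_reduced_tuple n y z)"

definition dvec :: "nat \<Rightarrow> (nat \<Rightarrow> nat) \<Rightarrow> nat \<Rightarrow> nat" where
  "dvec n y i = (\<Prod>h\<in>{1..2^n - 1}. ztuple n y h ^ (1 - eps i h))"

definition dnorm :: "nat \<Rightarrow> (nat \<Rightarrow> nat) \<Rightarrow> real" where
  "dnorm n y = sqrt (\<Sum>i<n. (real (dvec n y i))\<^sup>2)"

end

theory Submission
  imports Defs "HOL-Computational_Algebra.Primes" "HOL-Library.FuncSet"
begin


definition Bs :: "nat \<Rightarrow> nat \<Rightarrow> nat set" where
  "Bs n h = {j. j < n \<and> eps j h = 1}"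

lemma eps01: "eps j h = 0 \<or> eps j h = 1"
  unfolding eps_def by auto

lemma eps_Suc: "eps (Suc j) h = eps j (h div 2)"
  unfolding eps_def by (simp add: div_mult2_eq mult.commute)

lemma eps_0: "eps 0 h = h mod 2"
  unfolding eps_def by simp

lemma binexp: "h < 2^n \<Longrightarrow> h = (\<Sum>j<n. eps j h * 2^j)"
proof (induction n arbitrary: h)
  case 0
  then show ?case by simp
next
  case (Suc n)
  have "h div 2 < 2^n" using Suc.prems by auto
  hence ih: "h div 2 = (\<Sum>j<n. eps j (h div 2) * 2^j)" using Suc.IH by blast
  have "(\<Sum>j<Suc n. eps j h * 2^j) = eps 0 h + (\<Sum>j<n. eps (Suc j) h * 2^(Suc j))"
    by (simp only: sum.lessThan_Suc_shift power_0 mult_1_right)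
  also have "\<dots> = h mod 2 + 2 * (\<Sum>j<n. eps j (h div 2) * 2^j)"
    by (simp add: eps_0 eps_Suc sum_distrib_left mult.assoc mult.left_commute)
  also have "\<dots> = h" using ih by simp
  finally show ?case by simp
qed

lemma Bs_inj:
  assumes "h < 2^n" "l < 2^n" "Bs n h = Bs n l"
  shows "h = l"
proof -
  have "\<forall>j<n. eps j h = eps j l"
  proof (intro allI impI)
    fix j assume "j < n"
    hence "eps j h = 1 \<longleftrightarrow> eps j l = 1" using assms(3) unfolding Bs_def by blast
    thus "eps j h = eps j l" using eps01[of j h] eps01[of j l] by auto
  qed
  hence "(\<Sum>j<n. eps j h * 2^j) = (\<Sum>j<n. eps j l * 2^j)" by simp
  thus ?thesis using binexp[OF assms(1)] binexp[OF assms(2)] by simp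
qed

lemma Bs_nonempty:
  assumes "h < 2^n" "h \<ge> 1"
  shows "Bs n h \<noteq> {}"
proof
  assume "Bs n h = {}"
  hence "\<forall>j<n. eps j h = 0" using eps01 unfolding Bs_def by blast
  hence "(\<Sum>j<n. eps j h * 2^j) = 0" by simp
  thus False using binexp[OF assms(1)] assms(2) by simp
qed

lemma Bs_sub: "Bs n h \<subseteq> {..<n}" unfolding Bs_def by auto

lemma eps_le_iff: "eps j h \<le> eps j l \<longleftrightarrow> (eps j h = 1 \<longrightarrow> eps j l = 1)"
  using eps01[of j h] eps01[of j l] by auto

lemma preceq_Bs: "preceq n h l \<longleftrightarrow> Bs n h \<subseteq> Bs n l"
  unfolding preceq_def Bs_def eps_le_iff by auto

lemma H_lt: "h \<in> {1..2^n-1} \<Longrightarrow> h < (2::nat)^n"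
proof -
  assume "h \<in> {1..2^n-1}"
  hence "h \<le> 2^n - 1" by simp
  moreover have "(0::nat) < 2^n" by simp
  ultimately show ?thesis by linarith
qed

lemma Bs_inj_on: "inj_on (Bs n) {1..2^n-1}"
  by (rule inj_onI) (use Bs_inj H_lt in blast)

lemma Bs_image: "Bs n ` {1..2^n-1} = Pow {..<n} - {{}}"
proof -
  have sub: "Bs n ` {1..2^n-1} \<subseteq> Pow {..<n} - {{}}"
    using Bs_sub Bs_nonempty H_lt by auto
  have "card (Bs n ` {1..2^n-1}) = 2^n - 1"
    using card_image[OF Bs_inj_on[of n]] by simp
  moreover have "card (Pow {..<n} - {{}}) = 2^n - 1"
    by (simp add: card_Pow card_Diff_singleton)
  ultimately show ?thesis using sub by (intro card_subset_eq) auto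
qed




definition fsum :: "nat \<Rightarrow> (nat \<Rightarrow> nat) \<Rightarrow> nat \<Rightarrow> nat" where
  "fsum n e j = (\<Sum>h\<in>{1..2^n-1}. eps j h * e h)"

definition Gsum :: "nat \<Rightarrow> (nat \<Rightarrow> nat) \<Rightarrow> nat set \<Rightarrow> nat" where
  "Gsum n e T = (\<Sum>h\<in>{h\<in>{1..2^n-1}. T \<subseteq> Bs n h}. e h)"

definition chainsupp :: "nat \<Rightarrow> (nat \<Rightarrow> nat) \<Rightarrow> bool" where
  "chainsupp n e \<longleftrightarrow> (\<forall>h\<in>{1..2^n-1}. \<forall>l\<in>{1..2^n-1}. e h > 0 \<and> e l > 0 \<longrightarrow>
      Bs n h \<subseteq> Bs n l \<or> Bs n l \<subseteq> Bs n h)"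

lemma eps_one_iff: "j < n \<Longrightarrow> eps j h = 1 \<longleftrightarrow> j \<in> Bs n h"
  unfolding Bs_def by auto

lemma eps_zero_iff: "j < n \<Longrightarrow> eps j h = 0 \<longleftrightarrow> j \<notin> Bs n h"
  unfolding Bs_def using eps01[of j h] by auto

lemma G_le_f:
  assumes "j \<in> T" "T \<subseteq> {..<n}"
  shows "Gsum n e T \<le> fsum n e j"
proof -
  have jn: "j < n" using assms by auto
  have "Gsum n e T = (\<Sum>h\<in>{h\<in>{1..2^n-1}. T \<subseteq> Bs n h}. eps j (h::nat) * e h)"
    unfolding Gsum_def
    by (rule sum.cong) (use assms in \<open>auto simp: Bs_def\<close>)
  also have "\<dots> \<le> fsum n e j" unfolding fsum_def
    by (rule sum_mono2) auto
  finally show ?thesis .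
qed

lemma ex_f_eq_G:
  assumes ch: "chainsupp n e" and T: "T \<noteq> {}" "T \<subseteq> {..<n}"
  shows "\<exists>j\<in>T. fsum n e j = Gsum n e T"
proof -
  define S where "S = {h\<in>{1..2^n-1}. e h > 0 \<and> \<not> T \<subseteq> Bs n h}"
  have "\<exists>j\<in>T. \<forall>h\<in>S. j \<notin> Bs n h"
  proof (cases "S = {}")
    case True then show ?thesis using T by auto
  next
    case False
    have finS: "finite S" unfolding S_def by auto
    define m where "m = Max ((\<lambda>l. card (Bs n l)) ` S)"
    have "m \<in> (\<lambda>l. card (Bs n l)) ` S" unfolding m_def using Max_in finS False by auto
    then obtain hs where hs1: "hs \<in> S" "card (Bs n hs) = m" by auto
    have "\<forall>l\<in>S. card (Bs n l) \<le> m" unfolding m_def using Max_ge finS by auto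
    hence hs: "hs \<in> S" "\<forall>l\<in>S. card (Bs n l) \<le> card (Bs n hs)" using hs1 by auto
    from hs(1) obtain j where j: "j \<in> T" "j \<notin> Bs n hs" unfolding S_def by auto
    have "\<forall>h\<in>S. j \<notin> Bs n h"
    proof
      fix h assume h: "h \<in> S"
      have "Bs n h \<subseteq> Bs n hs \<or> Bs n hs \<subseteq> Bs n h"
        using ch h hs(1) unfolding chainsupp_def S_def by auto
      moreover have "Bs n hs \<subseteq> Bs n h \<Longrightarrow> Bs n h \<subseteq> Bs n hs"
      proof -
        assume a: "Bs n hs \<subseteq> Bs n h"
        have "finite (Bs n h)" using finite_subset[OF Bs_sub] by blast
        moreover have "card (Bs n h) \<le> card (Bs n hs)" using hs(2) h by blast
        ultimately have "Bs n hs = Bs n h" using card_seteq a by blast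
        thus ?thesis by simp
      qed
      ultimately show "j \<notin> Bs n h" using j by auto
    qed
    thus ?thesis using j by auto
  qed
  then obtain j where j: "j \<in> T" "\<forall>h\<in>S. j \<notin> Bs n h" by auto
  have jn: "j < n" using j T by auto
  have "fsum n e j = (\<Sum>h\<in>{1..2^n-1}. if T \<subseteq> Bs n h then e h else 0)"
    unfolding fsum_def
  proof (rule sum.cong)
    fix h :: nat assume h: "h \<in> {1..2^n-1}"
    show "eps j h * e h = (if T \<subseteq> Bs n h then e h else 0)"
    proof (cases "e h = 0")
      case True then show ?thesis by simp
    next
      case False
      show ?thesis
      proof (cases "T \<subseteq> Bs n h")
        case True then show ?thesis using j jn eps_one_iff by auto
      next
        case F2: False
        hence "h \<in> S" using h False unfolding S_def by auto
        hence "j \<notin> Bs n h" using j by auto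
        thus ?thesis using F2 eps_zero_iff[OF jn] by auto
      qed
    qed
  qed simp
  also have "\<dots> = Gsum n e T" unfolding Gsum_def
    by (simp add: sum.If_cases Int_def conj_commute)
  finally show ?thesis using j by auto
qed

lemma G_eq:
  assumes "chainsupp n e" "chainsupp n e'" "\<forall>j<n. fsum n e j = fsum n e' j"
    "T \<noteq> {}" "T \<subseteq> {..<n}"
  shows "Gsum n e T = Gsum n e' T"
proof -
  obtain j where j: "j \<in> T" "fsum n e j = Gsum n e T" using ex_f_eq_G[OF assms(1) assms(4) assms(5)] by blast
  obtain j' where j': "j' \<in> T" "fsum n e' j' = Gsum n e' T" using ex_f_eq_G[OF assms(2) assms(4) assms(5)] by blast
  have a: "Gsum n e' T \<le> fsum n e' j" using G_le_f[OF j(1) assms(5)] .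
  have b: "Gsum n e T \<le> fsum n e j'" using G_le_f[OF j'(1) assms(5)] .
  have "j < n" "j' < n" using j(1) j'(1) assms(5) by auto
  hence "fsum n e j = fsum n e' j" "fsum n e j' = fsum n e' j'" using assms(3) by auto
  thus ?thesis using a b j(2) j'(2) by linarith
qed

lemma G_split:
  assumes h: "h \<in> {1..2^n-1}"
  shows "Gsum n e (Bs n h) = e h + (\<Sum>l\<in>{l\<in>{1..2^n-1}. Bs n h \<subset> Bs n l}. e l)"
proof -
  have "{l\<in>{1..2^n-1}. Bs n h \<subseteq> Bs n l} = insert h {l\<in>{1..2^n-1}. Bs n h \<subset> Bs n l}"
    using h inj_onD[OF Bs_inj_on[of n]] by auto
  thus ?thesis unfolding Gsum_def by simp
qed

lemma e_unique:
  assumes "chainsupp n e" "chainsupp n e'" "\<forall>j<n. fsum n e j = fsum n e' j"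
  shows "\<forall>h\<in>{1..2^n-1}. e h = e' h"
proof -
  have "\<And>k h. h \<in> {1..2^n-1} \<Longrightarrow> k = n - card (Bs n h) \<Longrightarrow> e h = e' h"
  proof -
    fix k
    show "\<And>h. h \<in> {1..2^n-1} \<Longrightarrow> k = n - card (Bs n h) \<Longrightarrow> e h = e' h"
    proof (induction k rule: less_induct)
      case (less k h)
      have rest: "(\<Sum>l\<in>{l\<in>{1..2^n-1}. Bs n h \<subset> Bs n l}. e l)
          = (\<Sum>l\<in>{l\<in>{1..2^n-1}. Bs n h \<subset> Bs n l}. e' l)"
      proof (rule sum.cong)
        fix l assume l: "l \<in> {l\<in>{1..2^n-1}. Bs n h \<subset> Bs n l}"
        have "card (Bs n h) < card (Bs n l)"
          using l finite_subset[OF Bs_sub] by (auto intro: psubset_card_mono)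
        moreover have "card (Bs n l) \<le> n"
          using card_mono[OF _ Bs_sub[of n l]] by simp
        ultimately have "n - card (Bs n l) < k" using less.prems by auto
        thus "e l = e' l" using less.IH l by blast
      qed simp
      have "Gsum n e (Bs n h) = Gsum n e' (Bs n h)"
        using G_eq[OF assms] Bs_nonempty[OF H_lt] Bs_sub less.prems by auto
      thus ?case using G_split[OF less.prems(1)] rest by simp
    qed
  qed
  thus ?thesis by blast
qed




lemma mult_prod_pow:
  fixes z :: "nat \<Rightarrow> nat"
  assumes "prime p" "\<forall>h\<in>{1..2^n-1}. z h > 0"
  shows "multiplicity p (\<Prod>h\<in>{1..2^n-1}. z h ^ k h) = (\<Sum>h\<in>{1..2^n-1}. k h * multiplicity p (z h))"
proof -
  have "multiplicity p (\<Prod>h\<in>{1..2^n-1}. z h ^ k h) = (\<Sum>h\<in>{1..2^n-1}. multiplicity p (z h ^ k h))"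
    by (rule prime_elem_multiplicity_prod_distrib) (use assms in auto)
  also have "\<dots> = (\<Sum>h\<in>{1..2^n-1}. k h * multiplicity p (z h))"
    by (rule sum.cong) (use assms in \<open>auto simp: prime_elem_multiplicity_power_distrib\<close>)
  finally show ?thesis .
qed

lemma reduced_unique:
  assumes z: "is_reduced_tuple n y z" and z': "is_reduced_tuple n y z'"
  shows "z = z'"
proof
  fix h
  show "z h = z' h"
  proof (cases "h \<in> {1..2^n-1}")
    case False
    have "z h = 0" using z False unfolding is_reduced_tuple_def by blast
    moreover have "z' h = 0" using z' False unfolding is_reduced_tuple_def by blast
    ultimately show ?thesis by simp
  next
    case hH: True
    have pos: "\<forall>h\<in>{1..2^n-1}. z h > 0" "\<forall>h\<in>{1..2^n-1}. z' h > 0"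
      using z z' unfolding is_reduced_tuple_def by auto
    show ?thesis
    proof (rule multiplicity_eq_nat)
      show "z h > 0" "z' h > 0" using pos hH by auto
      fix p :: nat assume p: "prime p"
      define e where "e = (\<lambda>h. multiplicity p (z h))"
      define e' where "e' = (\<lambda>h. multiplicity p (z' h))"
      have ch: "chainsupp n (\<lambda>h. multiplicity p (w h))" if w: "is_reduced_tuple n y w" for w
        unfolding chainsupp_def
      proof (intro ballI impI)
        fix h l assume h: "h \<in> {1..2^n-1}" and l: "l \<in> {1..2^n-1}"
          and g: "0 < multiplicity p (w h) \<and> 0 < multiplicity p (w l)"
        have wp: "w h > 0" "w l > 0" using w h l unfolding is_reduced_tuple_def by blast+
        have "p dvd w h" "p dvd w l"
          using g prime_multiplicity_gt_zero_iff[of p "w h"] prime_multiplicity_gt_zero_iff[of p "w l"] p wp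
          by auto
        moreover have "p \<noteq> 1" using p by auto
        ultimately have "\<not> coprime (w h) (w l)" using coprime_common_divisor_nat by blast
        hence "preceq n h l \<or> preceq n l h" using w h l unfolding is_reduced_tuple_def by blast
        thus "Bs n h \<subseteq> Bs n l \<or> Bs n l \<subseteq> Bs n h" using preceq_Bs by blast
      qed
      have fs: "fsum n (\<lambda>h. multiplicity p (w h)) j = multiplicity p (y j)"
        if w: "is_reduced_tuple n y w" and j: "j < n" for w j
      proof -
        have "y j = (\<Prod>h\<in>{1..2^n-1}. w h ^ eps j h)" using w j unfolding is_reduced_tuple_def by blast
        moreover have "\<forall>h\<in>{1..2^n-1}. w h > 0" using w unfolding is_reduced_tuple_def by blast
        ultimately show ?thesis unfolding fsum_def using mult_prod_pow[OF p] by simp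
      qed
      have "\<forall>h\<in>{1..2^n-1}. multiplicity p (z h) = multiplicity p (z' h)"
        by (rule e_unique[OF ch[OF z] ch[OF z']]) (use fs z z' in auto)
      thus "multiplicity p (z h) = multiplicity p (z' h)" using hH by blast
    qed
  qed
qed

definition levs :: "nat \<Rightarrow> (nat \<Rightarrow> nat) \<Rightarrow> nat \<Rightarrow> nat \<Rightarrow> nat set" where
  "levs n y p t = {j. j < n \<and> t \<le> multiplicity p (y j)}"

definition exz :: "nat \<Rightarrow> (nat \<Rightarrow> nat) \<Rightarrow> nat \<Rightarrow> nat \<Rightarrow> nat" where
  "exz n y p h = card {t\<in>{1..multiplicity p (\<Prod>j<n. y j)}. levs n y p t = Bs n h}"

definition zcon :: "nat \<Rightarrow> (nat \<Rightarrow> nat) \<Rightarrow> nat \<Rightarrow> nat" where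
  "zcon n y h = (if h \<in> {1..2^n-1} then
     (\<Prod>p\<in>prime_factors (\<Prod>j<n. y j). p ^ exz n y p h) else 0)"

lemma zcon_pos: "h \<in> {1..2^n-1} \<Longrightarrow> zcon n y h > 0"
  unfolding zcon_def by (auto intro!: prod_pos simp: prime_gt_0_nat in_prime_factors_iff)

lemma zcon_mult:
  assumes y: "\<forall>j<n. y j \<ge> 1" and h: "h \<in> {1..2^n-1}" and q: "prime q"
  shows "multiplicity q (zcon n y h) = exz n y q h"
proof -
  have m: "multiplicity q (zcon n y h) =
     (if q \<in> prime_factors (\<Prod>j<n. y j) then exz n y q h else 0)"
  proof -
    have "zcon n y h = (\<Prod>p\<in>prime_factors (\<Prod>j<n. y j). p ^ exz n y p h)"
      using h unfolding zcon_def by simp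
    moreover have "multiplicity q (\<Prod>p\<in>prime_factors (\<Prod>j<n. y j). p ^ exz n y p h) =
      (if q \<in> prime_factors (\<Prod>j<n. y j) then exz n y q h else 0)"
      by (rule multiplicity_prod_prime_powers) (use q in \<open>auto simp: in_prime_factors_iff\<close>)
    ultimately show ?thesis by simp
  qed
  show ?thesis
  proof (cases "q \<in> prime_factors (\<Prod>j<n. y j)")
    case True then show ?thesis using m by simp
  next
    case False
    have P0: "(\<Prod>j<n. y j) \<noteq> 0" using y by (simp add: Suc_le_eq)
    have "\<not> q dvd (\<Prod>j<n. y j)" using False q P0 by (simp add: in_prime_factors_iff)
    hence "multiplicity q (\<Prod>j<n. y j) = 0" using prime_elem_multiplicity_eq_zero_iff[of q] q P0 by auto
    hence "exz n y q h = 0" unfolding exz_def by simp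
    thus ?thesis using m by simp
  qed
qed

lemma nonempty_witness: "S \<noteq> {} \<Longrightarrow> (\<And>x. x \<in> S \<Longrightarrow> P) \<Longrightarrow> P" by blast

lemma levs_mono: "t1 \<le> t2 \<Longrightarrow> levs n y p t2 \<subseteq> levs n y p t1"
  unfolding levs_def by auto

lemma zcon_reduced:
  assumes y: "\<forall>j<n. y j \<ge> 1"
  shows "is_reduced_tuple n y (zcon n y)"
  unfolding is_reduced_tuple_def
proof (intro conjI)
  show "\<forall>h\<in>{1..2^n-1}. 0 < zcon n y h" using zcon_pos by blast
  show "\<forall>h. h \<notin> {1..2 ^ n - 1} \<longrightarrow> zcon n y h = 0" unfolding zcon_def by auto
  define M where "M = (\<lambda>p. multiplicity p (\<Prod>j<n. y j))"
  show "\<forall>h\<in>{1..2^n-1}. \<forall>l\<in>{1..2^n-1}. \<not> preceq n h l \<and> \<not> preceq n l h \<longrightarrow> coprime (zcon n y h) (zcon n y l)"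
  proof (intro ballI impI)
    fix h l assume h: "h \<in> {1..2^n-1}" and l: "l \<in> {1..2^n-1}"
      and inc: "\<not> preceq n h l \<and> \<not> preceq n l h"
    show "coprime (zcon n y h) (zcon n y l)"
    proof (rule ccontr)
      assume "\<not> coprime (zcon n y h) (zcon n y l)"
      hence "gcd (zcon n y h) (zcon n y l) \<noteq> 1" by (simp add: coprime_iff_gcd_eq_1)
      then obtain q where q: "prime q" "q dvd gcd (zcon n y h) (zcon n y l)"
        using prime_factor_nat by blast
      have "q dvd zcon n y h" "q dvd zcon n y l" using q by auto
      hence "multiplicity q (zcon n y h) > 0" "multiplicity q (zcon n y l) > 0"
        using prime_multiplicity_gt_zero_iff[of q "zcon n y h"] prime_multiplicity_gt_zero_iff[of q "zcon n y l"]
          q zcon_pos[OF h] zcon_pos[OF l] by auto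
      hence e1: "exz n y q h > 0" and e2: "exz n y q l > 0" using zcon_mult[OF y] h l q by auto
      have ne1: "{t\<in>{1..multiplicity q (\<Prod>j<n. y j)}. levs n y q t = Bs n h} \<noteq> {}"
      proof
        assume "{t\<in>{1..multiplicity q (\<Prod>j<n. y j)}. levs n y q t = Bs n h} = {}"
        hence "exz n y q h = 0" unfolding exz_def by (simp only: card.empty)
        thus False using e1 by simp
      qed
      have ne2: "{t\<in>{1..multiplicity q (\<Prod>j<n. y j)}. levs n y q t = Bs n l} \<noteq> {}"
      proof
        assume "{t\<in>{1..multiplicity q (\<Prod>j<n. y j)}. levs n y q t = Bs n l} = {}"
        hence "exz n y q l = 0" unfolding exz_def by (simp only: card.empty)
        thus False using e2 by simp
      qed
      obtain t1 where "t1 \<in> {t\<in>{1..multiplicity q (\<Prod>j<n. y j)}. levs n y q t = Bs n h}"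
        using ne1 by (rule nonempty_witness)
      hence t1: "levs n y q t1 = Bs n h" by blast
      obtain t2 where "t2 \<in> {t\<in>{1..multiplicity q (\<Prod>j<n. y j)}. levs n y q t = Bs n l}"
        using ne2 by (rule nonempty_witness)
      hence t2: "levs n y q t2 = Bs n l" by blast
      have "Bs n l \<subseteq> Bs n h \<or> Bs n h \<subseteq> Bs n l"
      proof (cases "t1 \<le> t2")
        case True then show ?thesis using levs_mono[OF True, of n y q] t1 t2 by simp
      next
        case False then show ?thesis using levs_mono[of t2 t1 n y q] t1 t2 by simp
      qed
      thus False using inc preceq_Bs by blast
    qed
  qed
  show "\<forall>j<n. y j = (\<Prod>h\<in>{1..2^n-1}. zcon n y h ^ eps j h)"
  proof (intro allI impI)
    fix j assume j: "j < n"
    show "y j = (\<Prod>h\<in>{1..2^n-1}. zcon n y h ^ eps j h)"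
    proof (rule multiplicity_eq_nat)
      show "y j > 0" using y j by (simp add: Suc_le_eq)
      show "0 < (\<Prod>h\<in>{1..2^n-1}. zcon n y h ^ eps j h)"
        using zcon_pos by (auto intro!: prod_pos)
      fix q :: nat assume q: "prime q"
      have P0: "(\<Prod>j<n. y j) \<noteq> 0" using y by (simp add: Suc_le_eq)
      have mle: "multiplicity q (y j) \<le> M q" unfolding M_def
        by (rule dvd_imp_multiplicity_le) (use j P0 in \<open>auto intro: dvd_prodI\<close>)
      define A where "A = (\<lambda>h. {t\<in>{1..M q}. levs n y q t = Bs n h \<and> j \<in> levs n y q t})"
      have "multiplicity q (\<Prod>h\<in>{1..2^n-1}. zcon n y h ^ eps j h)
            = (\<Sum>h\<in>{1..2^n-1}. eps j h * exz n y q h)"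
        using mult_prod_pow[OF q, of n "zcon n y" "eps j"] zcon_pos zcon_mult[OF y _ q] by simp
      also have "\<dots> = (\<Sum>h\<in>{1..2^n-1}. card (A h))"
      proof (rule sum.cong)
        fix h :: nat assume h: "h \<in> {1..2^n-1}"
        show "eps j h * exz n y q h = card (A h)"
        proof (cases "eps j h = 1")
          case True
          hence "j \<in> Bs n h" using j eps_one_iff by blast
          hence "A h = {t\<in>{1..M q}. levs n y q t = Bs n h}" unfolding A_def by auto
          thus ?thesis using True unfolding exz_def M_def by simp
        next
          case False
          hence "eps j h = 0" using eps01 by blast
          hence "j \<notin> Bs n h" using j eps_zero_iff by blast
          hence "A h = {}" unfolding A_def by auto
          thus ?thesis using \<open>eps j h = 0\<close> by simp
        qed
      qed simp
      also have "\<dots> = card (\<Union>h\<in>{1..2^n-1}. A h)"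
      proof (rule card_UN_disjoint[symmetric])
        show "finite {1..2^n-1::nat}" by simp
        show "\<forall>h\<in>{1..2^n-1}. finite (A h)" unfolding A_def by simp
        show "\<forall>h\<in>{1..2^n-1}. \<forall>l\<in>{1..2^n-1}. h \<noteq> l \<longrightarrow> A h \<inter> A l = {}"
        proof (intro ballI impI)
          fix h l :: nat assume h: "h \<in> {1..2^n-1}" and l: "l \<in> {1..2^n-1}" and hl: "h \<noteq> l"
          have "Bs n h \<noteq> Bs n l" using inj_onD[OF Bs_inj_on[of n] _ h l] hl by blast
          thus "A h \<inter> A l = {}" unfolding A_def by auto
        qed
      qed
      also have "(\<Union>h\<in>{1..2^n-1}. A h) = {1..multiplicity q (y j)}"
      proof
        show "(\<Union>h\<in>{1..2^n-1}. A h) \<subseteq> {1..multiplicity q (y j)}"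
        proof
          fix t assume "t \<in> (\<Union>h\<in>{1..2^n-1}. A h)"
          then obtain h where "t \<in> A h" by blast
          hence "1 \<le> t" "j \<in> levs n y q t" unfolding A_def by auto
          thus "t \<in> {1..multiplicity q (y j)}" unfolding levs_def by auto
        qed
        show "{1..multiplicity q (y j)} \<subseteq> (\<Union>h\<in>{1..2^n-1}. A h)"
        proof
          fix t assume t: "t \<in> {1..multiplicity q (y j)}"
          have "levs n y q t \<in> Pow {..<n} - {{}}"
            using t j unfolding levs_def by auto
          then obtain h where h: "h \<in> {1..2^n-1}" "levs n y q t = Bs n h"
            using Bs_image[of n] by (metis imageE)
          have "j \<in> levs n y q t" using t j unfolding levs_def by auto
          thus "t \<in> (\<Union>h\<in>{1..2^n-1}. A h)" using h t mle unfolding A_def by auto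
        qed
      qed
      finally show "multiplicity q (y j) = multiplicity q (\<Prod>h\<in>{1..2^n-1}. zcon n y h ^ eps j h)"
        by simp
    qed
  qed
qed

lemma ztuple_reduced:
  assumes y: "\<forall>j<n. y j \<ge> 1"
  shows "is_reduced_tuple n y (ztuple n y)"
proof -
  have "\<exists>!z. is_reduced_tuple n y z"
    using zcon_reduced[OF y] reduced_unique by blast
  thus ?thesis unfolding ztuple_def by (rule theI')
qed




lemma bezout_set:
  fixes d :: "nat \<Rightarrow> nat"
  assumes "finite A"
  shows "\<exists>g u. (\<forall>i\<in>A. g dvd int (d i)) \<and> (\<Sum>i\<in>A. u i * int (d i)) = g"
  using assms
proof (induction A rule: finite_induct)
  case empty
  then show ?case by auto
next
  case (insert a A)
  then obtain g u where gu: "\<forall>i\<in>A. g dvd int (d i)" "(\<Sum>i\<in>A. u i * int (d i)) = g" by blast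
  obtain s t where st: "s * int (d a) + t * g = gcd (int (d a)) g" using bezout_int by blast
  define u' where "u' = (\<lambda>i. if i = a then s else t * u i)"
  have "(\<Sum>i\<in>insert a A. u' i * int (d i)) = s * int (d a) + (\<Sum>i\<in>A. t * (u i * int (d i)))"
    using insert.hyps unfolding u'_def by (auto intro!: sum.cong simp: mult.assoc)
  also have "\<dots> = gcd (int (d a)) g" using st gu(2) by (simp add: sum_distrib_left[symmetric])
  finally have "(\<Sum>i\<in>insert a A. u' i * int (d i)) = gcd (int (d a)) g" .
  moreover have "\<forall>i\<in>insert a A. gcd (int (d a)) g dvd int (d i)"
    using gu(1) by (auto intro: dvd_trans)
  ultimately show ?case by blast
qed

context
  fixes n :: nat and y :: "nat \<Rightarrow> nat"
  assumes y: "\<forall>j<n. y j \<ge> 1"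
begin

lemma red: "is_reduced_tuple n y (ztuple n y)"
  using ztuple_reduced[OF y] .

lemma zpos: "h \<in> {1..2^n-1} \<Longrightarrow> ztuple n y h > 0"
  using red unfolding is_reduced_tuple_def by blast

lemma dvec_pos: "dvec n y i > 0"
  unfolding dvec_def using zpos by (auto intro!: prod_pos)

lemma dvec_y: "i < n \<Longrightarrow> dvec n y i * y i = (\<Prod>h\<in>{1..2^n-1}. ztuple n y h)"
proof -
  assume i: "i < n"
  have "y i = (\<Prod>h\<in>{1..2^n-1}. ztuple n y h ^ eps i h)" using red i unfolding is_reduced_tuple_def by blast
  hence "dvec n y i * y i = (\<Prod>h\<in>{1..2^n-1}. ztuple n y h ^ (1 - eps i h) * ztuple n y h ^ eps i h)"
    unfolding dvec_def by (simp add: prod.distrib)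
  also have "\<dots> = (\<Prod>h\<in>{1..2^n-1}. ztuple n y h)"
  proof (rule prod.cong)
    fix h show "ztuple n y h ^ (1 - eps i h) * ztuple n y h ^ eps i h = ztuple n y h"
      using eps01[of i h] by auto
  qed simp
  finally show ?thesis .
qed

lemma no_common_prime:
  assumes n: "n \<ge> 1" and p: "prime p"
  shows "\<exists>i<n. \<not> p dvd dvec n y i"
proof (rule ccontr)
  assume "\<not> (\<exists>i<n. \<not> p dvd dvec n y i)"
  hence all: "\<forall>i<n. p dvd dvec n y i" by blast
  have dv: "p dvd dvec n y i \<longleftrightarrow> (\<exists>h\<in>{1..2^n-1}. eps i h = 0 \<and> p dvd ztuple n y h)" for i
  proof -
    have "p dvd dvec n y i \<longleftrightarrow> (\<exists>h\<in>{1..2^n-1}. p dvd ztuple n y h ^ (1 - eps i h))"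
      unfolding dvec_def using p by (simp add: prime_dvd_prod_iff)
    also have "\<dots> \<longleftrightarrow> (\<exists>h\<in>{1..2^n-1}. eps i h = 0 \<and> p dvd ztuple n y h)"
    proof -
      have "p dvd ztuple n y h ^ (1 - eps i h) \<longleftrightarrow> eps i h = 0 \<and> p dvd ztuple n y h" for h
        using eps01[of i h] p by (auto simp: prime_dvd_power_iff not_prime_unit)
      thus ?thesis by simp
    qed
    finally show ?thesis .
  qed
  define S where "S = {h\<in>{1..2^n-1}. p dvd ztuple n y h}"
  have "S \<noteq> {}" using all[rule_format, of 0] n dv unfolding S_def by auto
  have finS: "finite S" unfolding S_def by auto
  define m where "m = Min ((\<lambda>l. card (Bs n l)) ` S)"
  have "m \<in> (\<lambda>l. card (Bs n l)) ` S" unfolding m_def using Min_in finS \<open>S \<noteq> {}\<close> by auto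
  then obtain hm where hm1: "hm \<in> S" "card (Bs n hm) = m" by auto
  have mle: "\<forall>l\<in>S. m \<le> card (Bs n l)" unfolding m_def using Min_le finS by auto
  have hmH: "hm \<in> {1..2^n-1}" using hm1 unfolding S_def by auto
  obtain i where i: "i \<in> Bs n hm" using Bs_nonempty[OF H_lt[OF hmH]] hmH by auto
  have "i < n" using i Bs_sub by blast
  then obtain h where h: "h \<in> {1..2^n-1}" "eps i h = 0" "p dvd ztuple n y h" using all dv by blast
  have hS: "h \<in> S" using h unfolding S_def by auto
  have "\<not> coprime (ztuple n y h) (ztuple n y hm)"
    using h(3) hm1(1) p unfolding S_def using coprime_common_divisor_nat not_prime_1 by blast
  hence "preceq n h hm \<or> preceq n hm h" using red h(1) hmH unfolding is_reduced_tuple_def by blast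
  hence "Bs n h \<subseteq> Bs n hm \<or> Bs n hm \<subseteq> Bs n h" using preceq_Bs by blast
  moreover have "Bs n h \<subseteq> Bs n hm \<Longrightarrow> Bs n hm \<subseteq> Bs n h"
  proof -
    assume a: "Bs n h \<subseteq> Bs n hm"
    have "finite (Bs n hm)" using finite_subset[OF Bs_sub] by blast
    moreover have "card (Bs n hm) \<le> card (Bs n h)" using mle hS hm1 by auto
    ultimately have "Bs n h = Bs n hm" using card_seteq a by blast
    thus ?thesis by simp
  qed
  ultimately have "i \<in> Bs n h" using i by blast
  thus False using h(2) eps_zero_iff[OF \<open>i < n\<close>] by blast
qed

lemma bezout_d:
  assumes n: "n \<ge> 1"
  shows "\<exists>u. (\<Sum>i<n. u i * int (dvec n y i)) = 1"
proof -
  obtain g u where gu: "\<forall>i\<in>{..<n}. g dvd int (dvec n y i)" "(\<Sum>i<n. u i * int (dvec n y i)) = g"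
    using bezout_set[of "{..<n}" "dvec n y"] by auto
  have "\<bar>g\<bar> = 1"
  proof (rule ccontr)
    assume "\<bar>g\<bar> \<noteq> 1"
    then obtain p where p: "prime p" "p dvd g" using prime_factor_int by blast
    have p0: "p \<ge> 0" using p prime_ge_0_int by blast
    have "\<forall>i<n. nat p dvd dvec n y i"
    proof (intro allI impI)
      fix i assume "i < n"
      hence "p dvd int (dvec n y i)" using gu(1) p(2) dvd_trans by blast
      hence "int (nat p) dvd int (dvec n y i)" using p0 by simp
      thus "nat p dvd dvec n y i" by (simp only: of_nat_dvd_iff)
    qed
    moreover have "prime (nat p)" using p by simp
    ultimately show False using no_common_prime[OF n] by blast
  qed
  hence "g = 1 \<or> g = -1" by auto
  thus ?thesis
  proof
    assume "g = 1" thus ?thesis using gu(2) by blast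
  next
    assume "g = -1"
    hence "(\<Sum>i<n. (- u i) * int (dvec n y i)) = 1" using gu(2) by (simp add: sum_negf)
    thus ?thesis by (rule exI[of _ "\<lambda>i. - u i"])
  qed
qed

end




lemma card_box:
  fixes A :: "nat set" and a b :: int
  assumes "finite A" "a \<le> b + 1"
  shows "card {w :: nat \<Rightarrow> int. (\<forall>i. i \<notin> A \<longrightarrow> w i = 0) \<and> (\<forall>i\<in>A. a \<le> w i \<and> w i \<le> b)}
         \<le> nat (b - a + 1) ^ card A"
proof -
  define E where "E = (\<lambda>f::nat \<Rightarrow> int. \<lambda>i. if i \<in> A then f i else 0)"
  have sub: "{w :: nat \<Rightarrow> int. (\<forall>i. i \<notin> A \<longrightarrow> w i = 0) \<and> (\<forall>i\<in>A. a \<le> w i \<and> w i \<le> b)}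
        \<subseteq> E ` (PiE A (\<lambda>_. {a..b}))"
  proof
    fix w assume w: "w \<in> {w :: nat \<Rightarrow> int. (\<forall>i. i \<notin> A \<longrightarrow> w i = 0) \<and> (\<forall>i\<in>A. a \<le> w i \<and> w i \<le> b)}"
    have "w = E (restrict w A)" using w unfolding E_def by (auto simp: fun_eq_iff restrict_apply)
    moreover have "restrict w A \<in> PiE A (\<lambda>_. {a..b})" using w by auto
    ultimately show "w \<in> E ` (PiE A (\<lambda>_. {a..b}))" by blast
  qed
  have fin: "finite (PiE A (\<lambda>_. {a..b}))" using assms by (intro finite_PiE) auto
  have "card {w :: nat \<Rightarrow> int. (\<forall>i. i \<notin> A \<longrightarrow> w i = 0) \<and> (\<forall>i\<in>A. a \<le> w i \<and> w i \<le> b)}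
      \<le> card (E ` (PiE A (\<lambda>_. {a..b})))"
    by (rule card_mono[OF finite_imageI[OF fin] sub])
  also have "\<dots> \<le> card (PiE A (\<lambda>_. {a..b}))" by (rule card_image_le[OF fin])
  also have "\<dots> = nat (b - a + 1) ^ card A" using assms by (simp add: card_PiE)
  finally show ?thesis .
qed

lemma finite_box:
  fixes A :: "nat set" and a b :: int
  assumes "finite A"
  shows "finite {w :: nat \<Rightarrow> int. (\<forall>i. i \<notin> A \<longrightarrow> w i = 0) \<and> (\<forall>i\<in>A. a \<le> w i \<and> w i \<le> b)}"
proof -
  define E where "E = (\<lambda>f::nat \<Rightarrow> int. \<lambda>i. if i \<in> A then f i else 0)"
  have sub: "{w :: nat \<Rightarrow> int. (\<forall>i. i \<notin> A \<longrightarrow> w i = 0) \<and> (\<forall>i\<in>A. a \<le> w i \<and> w i \<le> b)}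
        \<subseteq> E ` (PiE A (\<lambda>_. {a..b}))"
  proof
    fix w assume w: "w \<in> {w :: nat \<Rightarrow> int. (\<forall>i. i \<notin> A \<longrightarrow> w i = 0) \<and> (\<forall>i\<in>A. a \<le> w i \<and> w i \<le> b)}"
    have "w = E (restrict w A)" using w unfolding E_def by (auto simp: fun_eq_iff restrict_apply)
    moreover have "restrict w A \<in> PiE A (\<lambda>_. {a..b})" using w by auto
    ultimately show "w \<in> E ` (PiE A (\<lambda>_. {a..b}))" by blast
  qed
  have fin: "finite (PiE A (\<lambda>_. {a..b}))" using assms by (intro finite_PiE) auto
  show ?thesis by (rule finite_subset[OF sub finite_imageI[OF fin]])
qed

lemma main_count:
  fixes n :: nat and y :: "nat \<Rightarrow> nat" and X :: real
  assumes n: "n \<ge> 1" and X: "X \<ge> 1" and y: "\<forall>i<n. 1 \<le> y i \<and> real (y i) \<le> X"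
  shows "real (Ncount n y X) \<le> 4 ^ (n - 1) * sqrt (real n) * X ^ (n - 1) / dnorm n y"
proof -
  have y1: "\<forall>j<n. y j \<ge> 1" using y by blast
  define d where "d = dvec n y"
  define K where "K = (\<Prod>h\<in>{1..2^n-1}. ztuple n y h)"
  have dpos: "\<And>i. d i > 0" unfolding d_def using dvec_pos[OF y1] by blast
  have dy: "\<And>i. i < n \<Longrightarrow> d i * y i = K" unfolding d_def K_def using dvec_y[OF y1] by blast
  obtain u where u: "(\<Sum>i<n. u i * int (d i)) = 1" using bezout_d[OF y1 n] unfolding d_def by blast
  obtain k where k: "k < n" "\<forall>i<n. d i \<le> d k"
  proof -
    define M where "M = Max (d ` {..<n})"
    have "0 \<in> {..<n}" using n by simp
    hence "M \<in> d ` {..<n}" unfolding M_def by (intro Max_in) auto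
    then obtain k where "k < n" "d k = M" by auto
    moreover have "\<forall>i<n. d i \<le> M" unfolding M_def by auto
    ultimately show ?thesis using that by auto
  qed
  define m where "m = nat \<lfloor>X\<rfloor>"
  have mX: "real m \<le> X" unfolding m_def using X by linarith
  have Xm: "X < real m + 1" unfolding m_def using X by linarith
  have ym: "\<And>i. i < n \<Longrightarrow> y i \<le> m"
  proof -
    fix i assume "i < n"
    hence "real (y i) \<le> X" using y by blast
    thus "y i \<le> m" using Xm by linarith
  qed
  define Sol where "Sol = {x :: nat \<Rightarrow> int.
      (\<forall>i\<ge>n. x i = 0) \<and> (\<forall>i<n. real_of_int \<bar>x i\<bar> \<le> X) \<and>
      (\<Sum>i<n. x i * (\<Prod>j\<in>{..<n} - {i}. int (y j))) = 0}"
  have Nc: "Ncount n y X = card Sol" unfolding Ncount_def Sol_def by simp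
  have sol_d: "(\<Sum>i<n. x i * int (d i)) = 0" if x: "x \<in> Sol" for x
  proof -
    define P where "P = (\<Prod>j<n. int (y j))"
    have QP: "(\<Prod>j\<in>{..<n} - {i}. int (y j)) * int (y i) = P" if "i < n" for i
      unfolding P_def using that by (simp add: prod.remove mult.commute)
    have "int K * (\<Sum>i<n. x i * (\<Prod>j\<in>{..<n} - {i}. int (y j))) = P * (\<Sum>i<n. x i * int (d i))"
      unfolding sum_distrib_left
    proof (rule sum.cong)
      fix i assume "i \<in> {..<n}"
      hence i: "i < n" by simp
      have "int K = int (d i) * int (y i)" using dy[OF i] by (metis of_nat_mult)
      thus "int K * (x i * (\<Prod>j\<in>{..<n} - {i}. int (y j))) = P * (x i * int (d i))"
        using QP[OF i] by (metis mult.commute mult.left_commute)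
    qed simp
    moreover have "(\<Sum>i<n. x i * (\<Prod>j\<in>{..<n} - {i}. int (y j))) = 0" using x unfolding Sol_def by blast
    moreover have "P \<noteq> 0" unfolding P_def using y1 by (simp add: Suc_le_eq)
    ultimately show ?thesis by simp
  qed
  define t where "t = (\<lambda>(c::int) i. if i < n then (c * u i) mod int (y i) else 0)"
  have tR: "\<exists>R. (\<Sum>i\<in>{..<n} - {k}. t c i * int (d i)) = c - int (d k) * R" for c
  proof -
    define q where "q = (\<lambda>i. (c * u i) div int (y i))"
    have tq: "t c i = c * u i - int (y i) * q i" if "i < n" for i
      unfolding t_def q_def using that by (simp add: minus_div_mult_eq_mod[symmetric] mult.commute)
    have "(\<Sum>i\<in>{..<n} - {k}. t c i * int (d i)) = (\<Sum>i\<in>{..<n} - {k}. c * (u i * int (d i)) - int K * q i)"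
    proof (rule sum.cong)
      fix i assume "i \<in> {..<n} - {k}"
      hence i: "i < n" by simp
      have kk: "int K = int (d i) * int (y i)" using dy[OF i] by (metis of_nat_mult)
      show "t c i * int (d i) = c * (u i * int (d i)) - int K * q i"
        by (simp only: tq[OF i] kk) (simp add: algebra_simps)
    qed simp
    also have "\<dots> = c * (\<Sum>i\<in>{..<n} - {k}. u i * int (d i)) - int K * (\<Sum>i\<in>{..<n} - {k}. q i)"
      by (simp add: sum_subtractf sum_distrib_left)
    also have "(\<Sum>i\<in>{..<n} - {k}. u i * int (d i)) = 1 - u k * int (d k)"
      using u k(1) by (simp add: sum_diff1)
    also have "int K = int (d k) * int (y k)" using dy[OF k(1)] by (metis of_nat_mult)
    finally have "(\<Sum>i\<in>{..<n} - {k}. t c i * int (d i)) =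
       c - int (d k) * (c * u k + int (y k) * (\<Sum>i\<in>{..<n} - {k}. q i))"
      by (simp add: algebra_simps)
    thus ?thesis by blast
  qed
  define D where "D = {0..<int (d k)}"
  define F where "F = (\<lambda>(x, c). \<lambda>i. if i = k then 0 else x i + t c i)"
  define A where "A = {..<n} - {k}"
  define T where "T = {w :: nat \<Rightarrow> int. (\<forall>i. i \<notin> A \<longrightarrow> w i = 0) \<and>
       (\<forall>i\<in>A. - int m \<le> w i \<and> w i \<le> 2 * int m)}"
  have xb: "\<bar>x i\<bar> \<le> int m" if "x \<in> Sol" "i < n" for x i
  proof -
    have "real_of_int \<bar>x i\<bar> \<le> X" using that unfolding Sol_def by blast
    thus ?thesis using Xm by linarith
  qed
  have tb: "0 \<le> t c i \<and> t c i \<le> int m" if "i < n" for c i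
  proof -
    have "int (y i) > 0" using y1 that by (simp add: Suc_le_eq)
    hence "0 \<le> t c i \<and> t c i < int (y i)" unfolding t_def using that by simp
    thus ?thesis using ym[OF that] by linarith
  qed
  have Fin: "F ` (Sol \<times> D) \<subseteq> T"
  proof
    fix w assume "w \<in> F ` (Sol \<times> D)"
    then obtain x c where xc: "x \<in> Sol" "c \<in> D" "w = F (x, c)" by auto
    show "w \<in> T" unfolding T_def A_def
    proof (intro CollectI conjI allI ballI impI)
      fix i assume "i \<notin> {..<n} - {k}"
      thus "w i = 0" using xc unfolding F_def t_def Sol_def by auto
    next
      fix i assume i: "i \<in> {..<n} - {k}"
      have i': "i < n" "i \<noteq> k" using i by auto
      have wi: "w i = x i + t c i" using xc(3) i'(2) unfolding F_def by simp
      have "\<bar>x i\<bar> \<le> int m" using xb[OF xc(1) i'(1)] .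
      moreover have "0 \<le> t c i \<and> t c i \<le> int m" using tb[OF i'(1)] .
      ultimately show "- int m \<le> w i" "w i \<le> 2 * int m" using wi by linarith+
    qed
  qed
  have Finj: "inj_on F (Sol \<times> D)"
  proof (rule inj_onI)
    fix p1 p2 assume p1: "p1 \<in> Sol \<times> D" and p2: "p2 \<in> Sol \<times> D" and eq: "F p1 = F p2"
    obtain x c where xc: "p1 = (x, c)" "x \<in> Sol" "c \<in> D" using p1 by auto
    obtain x' c' where xc': "p2 = (x', c')" "x' \<in> Sol" "c' \<in> D" using p2 by auto
    have coord: "x i + t c i = x' i + t c' i" if "i \<noteq> k" for i
    proof -
      have "F (x, c) i = F (x', c') i" using eq xc(1) xc'(1) by simp
      thus ?thesis using that unfolding F_def by simp
    qed
    have sx: "(\<Sum>i\<in>A. x i * int (d i)) = - x k * int (d k)" if "x \<in> Sol" for x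
    proof -
      have "(\<Sum>i<n. x i * int (d i)) = x k * int (d k) + (\<Sum>i\<in>A. x i * int (d i))"
        unfolding A_def using k(1) by (simp add: sum.remove)
      thus ?thesis using sol_d[OF that] by simp
    qed
    obtain R where R: "(\<Sum>i\<in>A. t c i * int (d i)) = c - int (d k) * R" using tR unfolding A_def by blast
    obtain R' where R': "(\<Sum>i\<in>A. t c' i * int (d i)) = c' - int (d k) * R'" using tR unfolding A_def by blast
    have "(\<Sum>i\<in>A. (x i + t c i) * int (d i)) = (\<Sum>i\<in>A. (x' i + t c' i) * int (d i))"
      using coord unfolding A_def by (intro sum.cong) auto
    hence "(\<Sum>i\<in>A. x i * int (d i)) + (\<Sum>i\<in>A. t c i * int (d i))
         = (\<Sum>i\<in>A. x' i * int (d i)) + (\<Sum>i\<in>A. t c' i * int (d i))"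
      by (simp add: distrib_right sum.distrib)
    hence e: "c - c' = int (d k) * (x k + R - x' k - R')"
      using sx[OF xc(2)] sx[OF xc'(2)] R R' by (simp add: algebra_simps)
    have "\<bar>c - c'\<bar> < int (d k)" using xc(3) xc'(3) unfolding D_def by auto
    have "x k + R - x' k - R' = 0"
    proof (rule ccontr)
      assume nz: "x k + R - x' k - R' \<noteq> 0"
      hence z1: "\<bar>x k + R - x' k - R'\<bar> \<ge> 1" by linarith
      have "\<bar>c - c'\<bar> = int (d k) * \<bar>x k + R - x' k - R'\<bar>" using e by (simp add: abs_mult)
      also have "\<dots> \<ge> int (d k) * 1" by (rule mult_left_mono[OF z1]) simp
      finally show False using \<open>\<bar>c - c'\<bar> < int (d k)\<close> by simp
    qed
    hence cc: "c = c'" using e by simp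
    have "\<forall>i. i \<noteq> k \<longrightarrow> x i = x' i" using coord cc by simp
    moreover have "x k = x' k"
    proof -
      have "(\<Sum>i\<in>A. x i * int (d i)) = (\<Sum>i\<in>A. x' i * int (d i))"
        using \<open>\<forall>i. i \<noteq> k \<longrightarrow> x i = x' i\<close> unfolding A_def by (intro sum.cong) auto
      hence "x k * int (d k) = x' k * int (d k)" using sx[OF xc(2)] sx[OF xc'(2)] by simp
      thus ?thesis using dpos[of k] by simp
    qed
    ultimately have "x = x'" by (auto simp: fun_eq_iff)
    thus "p1 = p2" using xc xc' cc by simp
  qed
  have finA: "finite A" unfolding A_def by simp
  have cardA: "card A = n - 1" unfolding A_def using k(1) by simp
  have finT: "finite T" unfolding T_def using finite_box[OF finA] .
  have cT: "card T \<le> (3 * m + 1) ^ (n - 1)"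
  proof -
    have "card T \<le> nat (2 * int m - - int m + 1) ^ card A"
      unfolding T_def by (rule card_box[OF finA]) simp
    also have "nat (2 * int m - - int m + 1) = 3 * m + 1" by simp
    finally show ?thesis using cardA by simp
  qed
  have "card (Sol \<times> D) \<le> card T" by (rule card_inj_on_le[OF Finj Fin finT])
  hence "card Sol * d k \<le> (3 * m + 1) ^ (n - 1)"
    using cT unfolding D_def by (simp add: card_cartesian_product)
  hence c1: "real (card Sol) * real (d k) \<le> (3 * real m + 1) ^ (n - 1)"
    by (metis (mono_tags, lifting) of_nat_le_iff of_nat_mult of_nat_power of_nat_Suc of_nat_add
         of_nat_1 of_nat_numeral)
  have "(3 * real m + 1) ^ (n - 1) \<le> (4 * X) ^ (n - 1)"
    by (rule power_mono) (use mX X in auto)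
  hence c2: "real (card Sol) * real (d k) \<le> 4 ^ (n - 1) * X ^ (n - 1)"
    using c1 by (simp add: power_mult_distrib)
  have "(\<Sum>i<n. (real (d i))\<^sup>2) \<le> (\<Sum>i<n. (real (d k))\<^sup>2)"
    using k(2) by (intro sum_mono power_mono) auto
  hence "dnorm n y \<le> sqrt (real n * (real (d k))\<^sup>2)" unfolding dnorm_def d_def by simp
  also have "\<dots> = sqrt (real n) * real (d k)" by (simp add: real_sqrt_mult)
  finally have dn: "dnorm n y \<le> sqrt (real n) * real (d k)" .
  have dnpos: "dnorm n y > 0"
  proof -
    have "(real (d k))\<^sup>2 \<le> (\<Sum>i<n. (real (d i))\<^sup>2)"
      using k(1) by (intro member_le_sum) auto
    moreover have "(real (d k))\<^sup>2 > 0" using dpos[of k] by simp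
    ultimately have "0 < (\<Sum>i<n. (real (d i))\<^sup>2)" by linarith
    moreover have "dnorm n y = sqrt (\<Sum>i<n. (real (d i))\<^sup>2)" unfolding dnorm_def d_def by simp
    ultimately show ?thesis by simp
  qed
  have dk0: "real (d k) > 0" using dpos[of k] by simp
  have "real (card Sol) \<le> 4 ^ (n - 1) * X ^ (n - 1) / real (d k)"
    using c2 dk0 by (simp add: field_simps)
  also have "\<dots> \<le> 4 ^ (n - 1) * X ^ (n - 1) * sqrt (real n) / dnorm n y"
  proof -
    have "1 / real (d k) \<le> sqrt (real n) / dnorm n y"
      using dn dnpos dk0 by (simp add: field_simps)
    moreover have "4 ^ (n - 1) * X ^ (n - 1) \<ge> (0::real)" using X by simp
    ultimately show ?thesis
      by (metis (no_types, lifting) divide_inverse inverse_eq_divide mult_left_mono times_divide_eq_right)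
  qed
  finally show ?thesis using Nc by (simp add: mult_ac)
qed



theorem mainTheorem5:
  fixes n :: nat
  assumes "n \<ge> 3"
  shows "\<exists>C>0. \<forall>(X::real) (y::nat \<Rightarrow> nat). X \<ge> 1 \<longrightarrow>
           (\<forall>i<n. 1 \<le> y i \<and> real (y i) \<le> X) \<longrightarrow>
           real (Ncount n y X) \<le> C * X ^ (n - 1) / dnorm n y"
proof (intro exI[of _ "4 ^ (n - 1) * sqrt (real n)"] conjI allI impI)
  show "(0::real) < 4 ^ (n - 1) * sqrt (real n)" using assms by simp
  fix X :: real and y :: "nat \<Rightarrow> nat"
  assume "X \<ge> 1" "\<forall>i<n. 1 \<le> y i \<and> real (y i) \<le> X"
  moreover have "n \<ge> 1" using assms by simp
  ultimately show "real (Ncount n y X) \<le> 4 ^ (n - 1) * sqrt (real n) * X ^ (n - 1) / dnorm n y"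
    using main_count by blast
qed

end
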